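(* Let $H=(V,E)$ be a loopy graph with $|V|=5$ and $\mathrm{vm}(H)=4$. Then $|E|\le 10$.
   Context: A loopy graph is a finite graph with no isolated vertices and no multiple edges, possibly with loops (a loop counts as one edge). A matching is a set of pairwise vertex-disjoint edges, loops allowed; $\mathrm{vm}(H)$ is the maximum number of vertices touched by a matching of $H$. *)

theory Defs
  imports Main
begin

text \<open>A loopy graph (V, E): edges are subsets of V of size 1 (a loop) or 2.
  Representing E as a set of sets excludes multiple edges.\<close>
definition loopy_graph :: "'a set \<Rightarrow> 'a set set \<Rightarrow> bool" where
  "loopy_graph V E \<longleftrightarrow> finite V \<and>
     (\<forall>e\<in>E. e \<subseteq> V \<and> (card e = 1 \<or> card e = 2)) \<and>
     (\<forall>v\<in>V. \<exists>e\<in>E. v \<in> e)"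

definition matching :: "'a set set \<Rightarrow> 'a set set \<Rightarrow> bool" where
  "matching E M \<longleftrightarrow> M \<subseteq> E \<and> (\<forall>e\<in>M. \<forall>f\<in>M. e \<noteq> f \<longrightarrow> e \<inter> f = {})"

definition vm :: "'a set set \<Rightarrow> nat" where
  "vm E = Max {card (\<Union>M) | M. matching E M}"

end

theory Submission
  imports Defs
begin

lemma card5E:
  assumes "card V = 5"
  obtains a b c d e where "V = {a,b,c,d,e}" "distinct [a,b,c,d,e]"
proof -
  have "card V = Suc (Suc (Suc (Suc (Suc 0))))" using assms by simp
  then obtain a V1 where "V = insert a V1" "a \<notin> V1" "card V1 = Suc (Suc (Suc (Suc 0)))"
    using card_Suc_eq[THEN iffD1] by blast
  moreover then obtain b V2 where "V1 = insert b V2" "b \<notin> V2" "card V2 = Suc (Suc (Suc 0))"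
    using card_Suc_eq[THEN iffD1] by blast
  moreover then obtain c V3 where "V2 = insert c V3" "c \<notin> V3" "card V3 = Suc (Suc 0)"
    using card_Suc_eq[THEN iffD1] by blast
  moreover then obtain d V4 where "V3 = insert d V4" "d \<notin> V4" "card V4 = Suc 0"
    using card_Suc_eq[THEN iffD1] by blast
  moreover then obtain e where "V4 = {e}"
    using card_1_singletonE by (metis One_nat_def)
  ultimately show ?thesis using that by auto
qed

lemma pair_cov: "v\<in>{a,b,c,d,e} \<Longrightarrow> w\<in>{a,b,c,d,e} \<Longrightarrow> v\<noteq>w \<Longrightarrow> {v,w} \<in> {{a},{b,e},{c,d}} \<union> {{b},{c,a},{d,e}} \<union> {{c},{d,b},{e,a}} \<union> {{d},{e,c},{a,b}} \<union> {{e},{a,d},{b,c}}"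
  by (elim insertE emptyE; simp add: insert_commute)

lemma sing_cov: "v\<in>{a,b,c,d,e} \<Longrightarrow> {v} \<in> {{a},{b,e},{c,d}} \<union> {{b},{c,a},{d,e}} \<union> {{c},{d,b},{e,a}} \<union> {{d},{e,c},{a,b}} \<union> {{e},{a,d},{b,c}}"
  by (elim insertE emptyE; simp)

lemma card_Un5: "card (A \<union> B \<union> C \<union> D \<union> F) \<le> card A + card B + card C + card D + card F"
proof -
  have "card (A \<union> B \<union> C \<union> D \<union> F) \<le> card (A \<union> B \<union> C \<union> D) + card F" by (rule card_Un_le)
  moreover have "card (A \<union> B \<union> C \<union> D) \<le> card (A \<union> B \<union> C) + card D" by (rule card_Un_le)
  moreover have "card (A \<union> B \<union> C) \<le> card (A \<union> B) + card C" by (rule card_Un_le)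
  moreover have "card (A \<union> B) \<le> card A + card B" by (rule card_Un_le)
  ultimately show ?thesis by linarith
qed

lemma card3_diff: "x \<in> {p,q,r} \<Longrightarrow> card ({p,q,r} - {x}) \<le> 2"
proof -
  assume "x \<in> {p,q,r}"
  have "card {p,q,r} \<le> 3" using card_length[of "[p,q,r]"] by simp
  thus ?thesis using \<open>x \<in> {p,q,r}\<close> by (simp only: card_Diff_singleton finite.intros finite_insert)
qed

lemma cover_not_sub:
  assumes lg: "loopy_graph V E" and vm4: "vm E = 4" and cV: "card V = 5"
    and C: "\<Union>C = V" and disj: "\<forall>x\<in>C. \<forall>y\<in>C. x \<noteq> y \<longrightarrow> x \<inter> y = {}"
  shows "\<not> C \<subseteq> E"
proof
  assume sub: "C \<subseteq> E"
  have m: "matching E C" using sub disj unfolding matching_def by blast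
  let ?S = "{card (\<Union>M) | M. matching E M}"
  have fin: "finite V" using lg unfolding loopy_graph_def by blast
  have "?S \<subseteq> {..card V}"
  proof
    fix n assume "n \<in> ?S"
    then obtain M where "n = card (\<Union>M)" "matching E M" by blast
    moreover have "\<Union>M \<subseteq> V" using \<open>matching E M\<close> lg
      unfolding matching_def loopy_graph_def by blast
    ultimately show "n \<in> {..card V}" using card_mono[OF fin] by auto
  qed
  hence "finite ?S" using finite_subset by blast
  moreover have "5 \<in> ?S" using m C cV by force
  ultimately have "5 \<le> vm E" unfolding vm_def by (meson Max_ge)
  with vm4 show False by simp
qed

theorem proposition5p7:
  fixes V :: "'a set" and E :: "'a set set"
  assumes "loopy_graph V E" and "card V = 5" and "vm E = 4"
  shows "card E \<le> 10"
proof -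
  obtain a b c d e where V: "V = {a,b,c,d,e}" and dist: "distinct [a,b,c,d,e]"
    using assms(2) by (rule card5E)
  define C0 where "C0 = {{a},{b,e},{c,d}}"
  define C1 where "C1 = {{b},{c,a},{d,e}}"
  define C2 where "C2 = {{c},{d,b},{e,a}}"
  define C3 where "C3 = {{d},{e,c},{a,b}}"
  define C4 where "C4 = {{e},{a,d},{b,c}}"
  have n0: "\<not> C0 \<subseteq> E" apply (rule cover_not_sub[OF assms(1) assms(3) assms(2)])
    using dist unfolding C0_def V by auto
  have n1: "\<not> C1 \<subseteq> E" apply (rule cover_not_sub[OF assms(1) assms(3) assms(2)])
    using dist unfolding C1_def V by auto
  have n2: "\<not> C2 \<subseteq> E" apply (rule cover_not_sub[OF assms(1) assms(3) assms(2)])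
    using dist unfolding C2_def V by auto
  have n3: "\<not> C3 \<subseteq> E" apply (rule cover_not_sub[OF assms(1) assms(3) assms(2)])
    using dist unfolding C3_def V by auto
  have n4: "\<not> C4 \<subseteq> E" apply (rule cover_not_sub[OF assms(1) assms(3) assms(2)])
    using dist unfolding C4_def V by auto
  obtain x0 where x0: "x0 \<in> C0" "x0 \<notin> E" using n0 by blast
  obtain x1 where x1: "x1 \<in> C1" "x1 \<notin> E" using n1 by blast
  obtain x2 where x2: "x2 \<in> C2" "x2 \<notin> E" using n2 by blast
  obtain x3 where x3: "x3 \<in> C3" "x3 \<notin> E" using n3 by blast
  obtain x4 where x4: "x4 \<in> C4" "x4 \<notin> E" using n4 by blast
  have cov: "E \<subseteq> C0 \<union> C1 \<union> C2 \<union> C3 \<union> C4"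
  proof
    fix f assume f: "f \<in> E"
    hence fV: "f \<subseteq> V" and fc: "card f = 1 \<or> card f = 2"
      using assms(1) unfolding loopy_graph_def by auto
    show "f \<in> C0 \<union> C1 \<union> C2 \<union> C3 \<union> C4"
    proof (cases "card f = 1")
      case True
      then obtain v where "f = {v}" by (meson card_1_singletonE)
      thus ?thesis using fV sing_cov[of v a b c d e] unfolding V C0_def C1_def C2_def C3_def C4_def by simp
    next
      case False
      then obtain v w where fw: "f = {v,w}" "v \<noteq> w" using fc by (meson card_2_iff)
      hence "v \<in> V" "w \<in> V" using fV by auto
      thus ?thesis using fw pair_cov[of v a b c d e w] unfolding V C0_def C1_def C2_def C3_def C4_def
        by simp
    qed
  qed
  have "E \<subseteq> (C0 - {x0}) \<union> (C1 - {x1}) \<union> (C2 - {x2}) \<union> (C3 - {x3}) \<union> (C4 - {x4})"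
    using cov x0 x1 x2 x3 x4 by blast
  hence "card E \<le> card ((C0 - {x0}) \<union> (C1 - {x1}) \<union> (C2 - {x2}) \<union> (C3 - {x3}) \<union> (C4 - {x4}))"
    by (intro card_mono) (simp_all add: C0_def C1_def C2_def C3_def C4_def)
  also have "\<dots> \<le> card (C0 - {x0}) + card (C1 - {x1}) + card (C2 - {x2}) + card (C3 - {x3}) + card (C4 - {x4})"
    by (rule card_Un5)
  also have "\<dots> \<le> 2 + 2 + 2 + 2 + 2"
  proof -
    have "card (C0 - {x0}) \<le> 2" using x0(1) unfolding C0_def by (rule card3_diff)
    moreover have "card (C1 - {x1}) \<le> 2" using x1(1) unfolding C1_def by (rule card3_diff)
    moreover have "card (C2 - {x2}) \<le> 2" using x2(1) unfolding C2_def by (rule card3_diff)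
    moreover have "card (C3 - {x3}) \<le> 2" using x3(1) unfolding C3_def by (rule card3_diff)
    moreover have "card (C4 - {x4}) \<le> 2" using x4(1) unfolding C4_def by (rule card3_diff)
    ultimately show ?thesis by linarith
  qed
  finally show ?thesis by simp
qed

end
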